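(* Let $G$ be a weighted undirected graph with internal vertex set $I$, boundary vertex set $X$, edge set $E$ and positive weights $w$, and let $S$ be its min cut function on $2^X$. Then a point $f\in\mathbb R^X$ lies in $F_S$ if and only if $f=\Phi_v$ for some flow $v$ on $G$.
   Context: Each edge is a pair of distinct vertices of $I\cup X$. A cut is a subset $r\subseteq I\cup X$; its edge set $\eth r$ is the set of edges with exactly one vertex in $r$, and $|\eth r|:=\sum_{e\in\eth r}w(e)$. The min cut function is $S(A):=\min\{|\eth r|: r\subseteq I\cup X,\ r\cap X=A\}$ for $A\subseteq X$. Fix an arbitrary orientation of each edge and set $s(i,e)=+1$ if $e$ points toward vertex $i\in e$ and $-1$ otherwise. A flow is a function $v:E\to\mathbb R$ with $|v(e)|\le w(e)$ for all $e$ and $\sum_{e\ni i}s(i,e)v(e)=0$ for every $i\in I$; its boundary flux is $\Phi_v(x):=\sum_{e\ni x}s(x,e)v(e)$ for $x\in X$. $F_S$ is the set of $f\in\mathbb R^X$ with $\big|\sum_{x\in A}f(x)\big|\le S(A)$ for all $A\subseteq X$. *)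

theory Defs
  imports Complex_Main
begin

text \<open>Edges are 2-element sets of vertices; an orientation is given by a function
  hd_of choosing the head of each edge.\<close>

definition orient_sign :: "('a set \<Rightarrow> 'a) \<Rightarrow> 'a \<Rightarrow> 'a set \<Rightarrow> real" where
  "orient_sign hd_of i e = (if hd_of e = i then 1 else -1)"

definition cut_edges :: "'a set set \<Rightarrow> 'a set \<Rightarrow> 'a set set" where
  "cut_edges E r = {e \<in> E. card (e \<inter> r) = 1}"

definition cut_weight :: "'a set set \<Rightarrow> ('a set \<Rightarrow> real) \<Rightarrow> 'a set \<Rightarrow> real" where
  "cut_weight E w r = (\<Sum>e\<in>cut_edges E r. w e)"

definition min_cut :: "'a set \<Rightarrow> 'a set \<Rightarrow> 'a set set \<Rightarrow> ('a set \<Rightarrow> real) \<Rightarrow> 'a set \<Rightarrow> real" where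
  "min_cut I X E w A = Min ((cut_weight E w) ` {r. r \<subseteq> I \<union> X \<and> r \<inter> X = A})"

definition is_flow :: "'a set \<Rightarrow> 'a set set \<Rightarrow> ('a set \<Rightarrow> real) \<Rightarrow> ('a set \<Rightarrow> 'a)
    \<Rightarrow> ('a set \<Rightarrow> real) \<Rightarrow> bool" where
  "is_flow I E w hd_of v \<longleftrightarrow>
     (\<forall>e\<in>E. \<bar>v e\<bar> \<le> w e) \<and>
     (\<forall>i\<in>I. (\<Sum>e\<in>{e\<in>E. i \<in> e}. orient_sign hd_of i e * v e) = 0)"

definition boundary_flux :: "'a set set \<Rightarrow> ('a set \<Rightarrow> 'a) \<Rightarrow> ('a set \<Rightarrow> real) \<Rightarrow> 'a \<Rightarrow> real" where
  "boundary_flux E hd_of v x = (\<Sum>e\<in>{e\<in>E. x \<in> e}. orient_sign hd_of x e * v e)"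

text \<open>F_S: points of R^X (functions, only values on X matter).\<close>
definition F_poly :: "'a set \<Rightarrow> ('a set \<Rightarrow> real) \<Rightarrow> ('a \<Rightarrow> real) set" where
  "F_poly X S = {f. \<forall>A\<subseteq>X. \<bar>\<Sum>x\<in>A. f x\<bar> \<le> S A}"

end

theory Submission imports Defs "HOL-Analysis.Analysis" begin

lemma flux_as_sum:
  assumes "finite E"
  shows "boundary_flux E hd_of v u = (\<Sum>e\<in>E. if u \<in> e then orient_sign hd_of u e * v e else 0)"
  unfolding boundary_flux_def using assms by (simp add: sum.inter_filter)

lemma sum_flux:
  assumes "finite E" "finite r"
  shows "(\<Sum>u\<in>r. boundary_flux E hd_of v u) = (\<Sum>e\<in>E. \<Sum>u\<in>e \<inter> r. orient_sign hd_of u e * v e)"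
proof -
  have "(\<Sum>u\<in>r. boundary_flux E hd_of v u) = (\<Sum>u\<in>r. \<Sum>e\<in>E. if u \<in> e then orient_sign hd_of u e * v e else 0)"
    using flux_as_sum[OF assms(1)] by simp
  also have "\<dots> = (\<Sum>e\<in>E. \<Sum>u\<in>r. if u \<in> e then orient_sign hd_of u e * v e else 0)"
    by (rule sum.swap)
  also have "\<dots> = (\<Sum>e\<in>E. \<Sum>u\<in>e \<inter> r. orient_sign hd_of u e * v e)"
  proof (rule sum.cong[OF refl])
    fix e assume "e \<in> E"
    have "e \<inter> r = {u\<in>r. u \<in> e}" by auto
    then show "(\<Sum>u\<in>r. if u \<in> e then orient_sign hd_of u e * v e else 0) = (\<Sum>u\<in>e \<inter> r. orient_sign hd_of u e * v e)"
      using assms(2) by (simp add: sum.inter_filter)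
  qed
  finally show ?thesis .
qed

lemma sign_abs: "\<bar>orient_sign hd_of u e\<bar> = 1"
  by (simp add: orient_sign_def)

lemma sign_sq: "orient_sign hd_of u e * orient_sign hd_of u e = 1"
  by (simp add: orient_sign_def)

lemma sign_opp:
  assumes "u \<noteq> u'" "hd_of e \<in> {u, u'}"
  shows "orient_sign hd_of u e * orient_sign hd_of u' e = -1"
  using assms by (auto simp add: orient_sign_def)

lemma edge_term_zero:
  assumes "e = {a,b}" "a \<noteq> b" "hd_of e \<in> e" "card (e \<inter> r) \<noteq> 1"
  shows "(\<Sum>u\<in>e \<inter> r. orient_sign hd_of u e * c) = 0"
proof -
  have so: "orient_sign hd_of a e * c + orient_sign hd_of b e * c = 0"
    using assms(1-3) by (auto simp: orient_sign_def)
  consider "a \<in> r" "b \<in> r" | "a \<notin> r" "b \<notin> r" | "a \<in> r" "b \<notin> r" | "a \<notin> r" "b \<in> r"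
    by blast
  then show ?thesis
  proof cases
    case 1
    then have "e \<inter> r = {a,b}" using assms(1) by blast
    then show ?thesis using so assms(2) by simp
  next
    case 2
    then have "e \<inter> r = {}" using assms(1) by blast
    then show ?thesis by simp
  next
    case 3
    then have "e \<inter> r = {a}" using assms(1,2) by blast
    then show ?thesis using assms(4) by simp
  next
    case 4
    then have "e \<inter> r = {b}" using assms(1,2) by blast
    then show ?thesis using assms(4) by simp
  qed
qed

lemma sum_flux_cut:
  assumes E: "\<forall>e\<in>E. \<exists>a b. e = {a, b} \<and> a \<noteq> b" and hd: "\<forall>e\<in>E. hd_of e \<in> e"
    and fin: "finite E" "finite r"
  shows "(\<Sum>u\<in>r. boundary_flux E hd_of v u) =
     (\<Sum>e\<in>cut_edges E r. \<Sum>u\<in>e \<inter> r. orient_sign hd_of u e * v e)"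
proof -
  have "(\<Sum>e\<in>E. \<Sum>u\<in>e \<inter> r. orient_sign hd_of u e * v e) =
     (\<Sum>e\<in>cut_edges E r. \<Sum>u\<in>e \<inter> r. orient_sign hd_of u e * v e)"
  proof (rule sum.mono_neutral_right)
  show "finite E" by fact
  show "cut_edges E r \<subseteq> E" by (auto simp: cut_edges_def)
  show "\<forall>e\<in>E - cut_edges E r. (\<Sum>u\<in>e \<inter> r. orient_sign hd_of u e * v e) = 0"
  proof
    fix e assume e: "e \<in> E - cut_edges E r"
    then obtain a b where ab: "e = {a,b}" "a \<noteq> b" using E by blast
    have c: "card (e \<inter> r) \<noteq> 1" using e by (auto simp: cut_edges_def)
    have h: "hd_of e \<in> e" using hd e by blast
    show "(\<Sum>u\<in>e \<inter> r. orient_sign hd_of u e * v e) = 0"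
      by (rule edge_term_zero[of e a b hd_of r "v e", OF ab h c])
  qed
  qed
  then show ?thesis using sum_flux[OF fin] by simp
qed


lemma flow_in_F:
  assumes fI: "finite I" and fX: "finite X"
    and E: "\<forall>e\<in>E. \<exists>a b. e = {a, b} \<and> a \<noteq> b \<and> a \<in> I \<union> X \<and> b \<in> I \<union> X"
    and hd: "\<forall>e\<in>E. hd_of e \<in> e"
    and fl: "is_flow I E w hd_of v" and fx: "\<forall>x\<in>X. f x = boundary_flux E hd_of v x"
  shows "f \<in> F_poly X (min_cut I X E w)"
  unfolding F_poly_def
proof (intro CollectI allI impI)
  fix A assume A: "A \<subseteq> X"
  let ?V = "I \<union> X"
  have finV: "finite ?V" using fI fX by simp
  have finE: "finite E"
  proof (rule finite_subset)
    show "E \<subseteq> Pow ?V"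
    proof
      fix e assume "e \<in> E"
      then obtain a b where "e = {a,b}" "a \<in> ?V" "b \<in> ?V" using E by blast
      then show "e \<in> Pow ?V" by auto
    qed
    show "finite (Pow ?V)" using finV by simp
  qed
  have E': "\<forall>e\<in>E. \<exists>a b. e = {a, b} \<and> a \<noteq> b" using E by fast
  let ?R = "{r. r \<subseteq> ?V \<and> r \<inter> X = A}"
  have sub: "?R \<subseteq> Pow ?V" by blast
  have finR: "finite ?R" using finite_subset[OF sub] finV by simp
  have neR: "A \<in> ?R" using A by auto
  have "min_cut I X E w A \<in> cut_weight E w ` ?R"
    unfolding min_cut_def using finR neR by (intro Min_in) auto
  then obtain r where r: "r \<subseteq> ?V" "r \<inter> X = A" and mc: "min_cut I X E w A = cut_weight E w r"
    by auto
  have finr: "finite r" using r finV finite_subset by blast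
  have "(\<Sum>u\<in>r. boundary_flux E hd_of v u) = (\<Sum>u\<in>r \<inter> X. boundary_flux E hd_of v u) + (\<Sum>u\<in>r - X. boundary_flux E hd_of v u)"
    using finr by (simp add: sum.Int_Diff)
  also have "(\<Sum>u\<in>r - X. boundary_flux E hd_of v u) = 0"
    using fl r unfolding is_flow_def boundary_flux_def by (intro sum.neutral) auto
  also have "(\<Sum>u\<in>r \<inter> X. boundary_flux E hd_of v u) = (\<Sum>x\<in>A. f x)"
    using r fx A by (intro sum.cong) auto
  finally have eq: "(\<Sum>x\<in>A. f x) = (\<Sum>u\<in>r. boundary_flux E hd_of v u)" by simp
  have "\<bar>\<Sum>u\<in>r. boundary_flux E hd_of v u\<bar> = \<bar>\<Sum>e\<in>cut_edges E r. \<Sum>u\<in>e \<inter> r. orient_sign hd_of u e * v e\<bar>"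
    using sum_flux_cut[OF E' hd finE finr] by simp
  also have "\<dots> \<le> (\<Sum>e\<in>cut_edges E r. \<bar>\<Sum>u\<in>e \<inter> r. orient_sign hd_of u e * v e\<bar>)"
    by (rule sum_abs)
  also have "\<dots> \<le> (\<Sum>e\<in>cut_edges E r. w e)"
  proof (rule sum_mono)
    fix e assume e: "e \<in> cut_edges E r"
    then have c: "card (e \<inter> r) = 1" and eE: "e \<in> E" by (auto simp: cut_edges_def)
    then obtain u where "e \<inter> r = {u}" by (auto simp: card_1_singleton_iff)
    then show "\<bar>\<Sum>u\<in>e \<inter> r. orient_sign hd_of u e * v e\<bar> \<le> w e"
      using fl eE by (simp add: abs_mult sign_abs is_flow_def)
  qed
  finally show "\<bar>\<Sum>x\<in>A. f x\<bar> \<le> min_cut I X E w A" using eq mc by (simp add: cut_weight_def)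
qed


lemma coord_cont : "continuous_on S (\<lambda>x::'b \<Rightarrow> real. x i)"
  by (rule continuous_on_subset[OF continuous_on_product_coordinates]) simp

lemma sum_split2:
  fixes h :: "'b \<Rightarrow> real"
  assumes "finite V" "u \<in> V" "u' \<in> V" "u \<noteq> u'"
  shows "sum h V = h u + h u' + sum h (V - {u,u'})"
proof -
  have "sum h V = h u + sum h (V - {u})" using assms by (simp add: sum.remove)
  also have "sum h (V - {u}) = h u' + sum h (V - {u} - {u'})"
    using assms by (intro sum.remove) auto
  also have "V - {u} - {u'} = V - {u,u'}" by auto
  finally show ?thesis by simp
qed

lemma F_to_flow:
  assumes fI: "finite I" and fX: "finite X" and disj: "I \<inter> X = {}"
    and E: "\<forall>e\<in>E. \<exists>a b. e = {a, b} \<and> a \<noteq> b \<and> a \<in> I \<union> X \<and> b \<in> I \<union> X"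
    and wpos: "\<forall>e\<in>E. w e > 0"
    and hd: "\<forall>e\<in>E. hd_of e \<in> e"
    and F: "f \<in> F_poly X (min_cut I X E w)"
  shows "\<exists>v. is_flow I E w hd_of v \<and> (\<forall>x\<in>X. f x = boundary_flux E hd_of v x)"
proof -
  define V where "V = I \<union> X"
  have finV: "finite V" using fI fX by (simp add: V_def)
  have EV: "e \<subseteq> V" if "e \<in> E" for e
  proof -
    from that E obtain a b where "e = {a,b}" "a \<in> I \<union> X" "b \<in> I \<union> X" by blast
    then show ?thesis by (auto simp: V_def)
  qed
  have finE: "finite E"
  proof (rule finite_subset)
    show "E \<subseteq> Pow V" using EV by blast
    show "finite (Pow V)" using finV by simp
  qed
  have E': "\<forall>e\<in>E. \<exists>a b. e = {a, b} \<and> a \<noteq> b" using E by fast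
  define g where "g = (\<lambda>u. if u \<in> X then f u else (0::real))"
  define ex where "ex = (\<lambda>v u. g u - boundary_flux E hd_of v u)"
  define Obj where "Obj = (\<lambda>v. \<Sum>u\<in>V. (ex v u)^2)"
  define B where "B = (\<lambda>e. if e \<in> E then {-w e..w e} else {0::real})"
  define K where "K = PiE UNIV B"
  have Kiff: "v \<in> K \<longleftrightarrow> (\<forall>e. v e \<in> B e)" for v
    by (simp add: K_def PiE_iff)
  have cK: "compact K"
  proof -
    have "compactin (product_topology (\<lambda>_. euclidean) UNIV) K"
      unfolding K_def by (subst compactin_PiE) (auto simp: B_def)
    then show ?thesis by (simp add: euclidean_product_topology)
  qed
  have K0: "(\<lambda>_. 0) \<in> K" using wpos by (auto simp: Kiff B_def less_imp_le)
  have cont: "continuous_on K Obj"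
    unfolding Obj_def ex_def boundary_flux_def
    by (intro continuous_on_sum continuous_on_power continuous_on_diff continuous_on_const continuous_on_mult coord_cont)
  obtain v where vK: "v \<in> K" and vmin: "\<And>y. y \<in> K \<Longrightarrow> Obj v \<le> Obj y"
    using continuous_attains_inf[OF cK _ cont] K0 by blast
  have vbound: "\<bar>v e\<bar> \<le> w e" if eE: "e \<in> E" for e
  proof -
    have "v e \<in> B e" using vK Kiff by blast
    then show ?thesis using eE by (simp add: B_def abs_le_iff)
  qed
  have minl: "ex v u \<le> ex v u'"
    if e: "e \<in> E" "u \<in> e" "u' \<in> e" "u \<noteq> u'" and lt: "orient_sign hd_of u e * v e < w e"
    for e u u'
  proof (rule ccontr)
    assume "\<not> ?thesis"
    hence gt: "ex v u' < ex v u" by simp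
    define su where "su = orient_sign hd_of u e"
    define d where "d = min (w e - su * v e) ((ex v u - ex v u')/2)"
    have dpos: "d > 0" using lt gt by (simp add: d_def su_def)
    have dle1: "d \<le> w e - su * v e" and dle2: "d \<le> (ex v u - ex v u')/2"
      unfolding d_def by (rule min.cobounded1, rule min.cobounded2)
    define v' where "v' = v(e := v e + su * d)"
    obtain a b where ab: "e = {a,b}" "a \<noteq> b" using E' e(1) by blast
    have ee: "e = {u,u'}" using ab e(2-4) by auto
    have hde: "hd_of e \<in> {u,u'}" using hd e(1) ee by auto
    have opp: "orient_sign hd_of u' e * su = -1"
      using sign_opp[of u u' hd_of e, OF e(4) hde] unfolding su_def by (simp add: mult.commute)
    have susq: "su * su = 1" unfolding su_def by (rule sign_sq)
    have sus: "su = 1 \<or> su = -1" unfolding su_def orient_sign_def by auto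
    have vb: "\<bar>v e\<bar> \<le> w e" by (rule vbound[OF e(1)])
    have v'K: "v' \<in> K"
      unfolding Kiff
    proof
      fix e'
      show "v' e' \<in> B e'"
      proof (cases "e' = e")
        case True
        have "\<bar>v e + su * d\<bar> \<le> w e" using sus vb dle1 dpos by (auto simp: abs_le_iff)
        then show ?thesis using True e(1) by (simp add: v'_def B_def abs_le_iff)
      next
        case False
        then show ?thesis using vK Kiff by (simp add: v'_def)
      qed
    qed
    have flux': "boundary_flux E hd_of v' z = boundary_flux E hd_of v z +
        (if z \<in> e then orient_sign hd_of z e * su * d else 0)" for z
    proof -
      have "boundary_flux E hd_of v' z =
          (\<Sum>e'\<in>E. (if z \<in> e' then orient_sign hd_of z e' * v e' else 0) +
               (if e' = e then (if z \<in> e then orient_sign hd_of z e * su * d else 0) else 0))"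
        unfolding flux_as_sum[OF finE] v'_def by (intro sum.cong refl) (auto simp: algebra_simps)
      also have "\<dots> = boundary_flux E hd_of v z +
        (if z \<in> e then orient_sign hd_of z e * su * d else 0)"
        unfolding sum.distrib flux_as_sum[OF finE] using finE e(1) by simp
      finally show ?thesis .
    qed
    have exu: "ex v' u = ex v u - d" using flux' [of u] e(2) susq
      unfolding ex_def su_def by (simp add: mult.assoc[symmetric])
    have exu': "ex v' u' = ex v u' + d" using flux' [of u'] e(3) opp
      unfolding ex_def by simp
    have exz: "ex v' z = ex v z" if "z \<notin> {u,u'}" for z using flux'[of z] that ee
      unfolding ex_def by simp
    have uV: "u \<in> V" "u' \<in> V" using EV[OF e(1)] e(2,3) by auto
    have "Obj v' = (ex v' u)^2 + (ex v' u')^2 + (\<Sum>z\<in>V - {u,u'}. (ex v' z)^2)"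
      unfolding Obj_def by (rule sum_split2[OF finV uV e(4)])
    also have "(\<Sum>z\<in>V - {u,u'}. (ex v' z)^2) = (\<Sum>z\<in>V - {u,u'}. (ex v z)^2)"
      using exz by (intro sum.cong) auto
    also have "(ex v' u)^2 + (ex v' u')^2 = (ex v u)^2 + (ex v u')^2 + 2 * (d * (d - (ex v u - ex v u')))"
      unfolding exu exu' by (simp add: power2_eq_square algebra_simps)
    also have "(\<Sum>z\<in>V - {u,u'}. (ex v z)^2) = Obj v - (ex v u)^2 - (ex v u')^2"
      unfolding Obj_def using sum_split2[OF finV uV e(4), of "\<lambda>z. (ex v z)^2"] by simp
    finally have "Obj v' = Obj v + 2 * (d * (d - (ex v u - ex v u')))" by simp
    moreover have "d * (d - (ex v u - ex v u')) < 0"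
      using dpos dle2 gt by (intro mult_pos_neg) auto
    ultimately have "Obj v' < Obj v" by simp
    with vmin[OF v'K] show False by simp
  qed
  define r where "r = {u\<in>V. ex v u > 0}"
  have finr: "finite r" using finV by (simp add: r_def)
  have rV: "r \<subseteq> V" by (auto simp: r_def)
  have sumg: "(\<Sum>u\<in>q. g u) = (\<Sum>x\<in>q \<inter> X. f x)" if "finite q" for q
  proof -
    have "q \<inter> X = {u\<in>q. u \<in> X}" by auto
    then show ?thesis using that by (simp add: g_def sum.inter_filter)
  qed
  have mcle: "min_cut I X E w (q \<inter> X) \<le> cut_weight E w q" if "q \<subseteq> V" for q
    unfolding min_cut_def
  proof (rule Min_le)
    have sub: "{r. r \<subseteq> I \<union> X \<and> r \<inter> X = q \<inter> X} \<subseteq> Pow V" by (auto simp: V_def)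
    have "finite {r. r \<subseteq> I \<union> X \<and> r \<inter> X = q \<inter> X}" using finite_subset[OF sub] finV by simp
    then show "finite (cut_weight E w ` {r. r \<subseteq> I \<union> X \<and> r \<inter> X = q \<inter> X})" by simp
    show "cut_weight E w q \<in> cut_weight E w ` {r. r \<subseteq> I \<union> X \<and> r \<inter> X = q \<inter> X}"
      using that by (auto simp: V_def)
  qed
  have Fle: "(\<Sum>x\<in>A. f x) \<le> min_cut I X E w A" if "A \<subseteq> X" for A
    using F that unfolding F_poly_def by (auto simp: abs_le_iff)
  have r_empty: "r = {}"
  proof (rule ccontr)
    assume ne: "r \<noteq> {}"
    have pos: "(\<Sum>u\<in>r. ex v u) > 0" using finr ne by (intro sum_pos) (auto simp: r_def)
    have cut: "(\<Sum>u\<in>r. boundary_flux E hd_of v u) = cut_weight E w r"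
      unfolding sum_flux_cut[OF E' hd finE finr] cut_weight_def
    proof (rule sum.cong[OF refl])
      fix e assume ec: "e \<in> cut_edges E r"
      then have eE: "e \<in> E" and c1: "card (e \<inter> r) = 1" by (auto simp: cut_edges_def)
      then obtain u where eu: "e \<inter> r = {u}" by (auto simp: card_1_singleton_iff)
      obtain a b where ab: "e = {a,b}" "a \<noteq> b" using E' eE by blast
      have ur: "u \<in> r" "u \<in> e" using eu by auto
      have uniq: "z = u" if "z \<in> e" "z \<in> r" for z
      proof -
        have "z \<in> e \<inter> r" using that by simp
        then show ?thesis using eu by simp
      qed
      obtain u' where u': "u' \<in> e" "u' \<noteq> u" "u' \<notin> r"
      proof (cases "u = a")
        case True
        have "b \<notin> r" using ab True uniq[of b] by auto
        then show ?thesis using that[of b] ab True by auto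
      next
        case False
        then have "u = b" using ur ab by auto
        have "a \<notin> r" using ab \<open>u = b\<close> uniq[of a] by auto
        then show ?thesis using that[of a] ab \<open>u = b\<close> by auto
      qed
      have u'V: "u' \<in> V" using EV[OF eE] u'(1) by auto
      have "ex v u > 0" using ur by (simp add: r_def)
      moreover have "ex v u' \<le> 0" using u'V u'(3) by (simp add: r_def)
      ultimately have "\<not> (orient_sign hd_of u e * v e < w e)"
        using minl[OF eE ur(2) u'(1) u'(2)[symmetric]] by linarith
      moreover have "\<bar>orient_sign hd_of u e * v e\<bar> \<le> w e"
        using vbound[OF eE] by (simp add: abs_mult sign_abs)
      ultimately have "orient_sign hd_of u e * v e = w e" by (simp add: abs_le_iff)
      then show "(\<Sum>z\<in>e \<inter> r. orient_sign hd_of z e * v e) = w e" using eu by simp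
    qed
    have "(\<Sum>u\<in>r. ex v u) = (\<Sum>u\<in>r. g u) - (\<Sum>u\<in>r. boundary_flux E hd_of v u)"
      unfolding ex_def by (simp add: sum_subtractf)
    also have "\<dots> = (\<Sum>x\<in>r \<inter> X. f x) - cut_weight E w r" using sumg[OF finr] cut by simp
    finally have eq: "(\<Sum>u\<in>r. ex v u) = (\<Sum>x\<in>r \<inter> X. f x) - cut_weight E w r" .
    have "(\<Sum>x\<in>r \<inter> X. f x) \<le> min_cut I X E w (r \<inter> X)" by (rule Fle) auto
    with mcle[OF rV] eq pos show False by linarith
  qed
  have cutV: "cut_edges E V = {}"
  proof -
    have "card (e \<inter> V) \<noteq> 1" if eE: "e \<in> E" for e
    proof -
      obtain a b where ab: "e = {a,b}" "a \<noteq> b" using E' eE by blast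
      have "e \<inter> V = e" using EV[OF eE] by auto
      then show ?thesis using ab by simp
    qed
    then show ?thesis by (auto simp: cut_edges_def)
  qed
  have fluxV: "(\<Sum>u\<in>V. boundary_flux E hd_of v u) = 0"
    using sum_flux_cut[OF E' hd finE finV, of v] cutV by simp
  have "(\<Sum>x\<in>X. f x) \<le> 0"
  proof -
    have "(\<Sum>x\<in>X. f x) \<le> min_cut I X E w (V \<inter> X)" using Fle[of X] by (simp add: V_def Int_absorb1)
    also have "\<dots> \<le> cut_weight E w V" by (rule mcle) simp
    also have "\<dots> = 0" using cutV by (simp add: cut_weight_def)
    finally show ?thesis .
  qed
  moreover have "(\<Sum>x\<in>X. f x) \<ge> 0"
  proof -
    have "\<bar>\<Sum>x\<in>X. f x\<bar> \<le> min_cut I X E w (V \<inter> X)" using F unfolding F_poly_def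
      by (simp add: V_def Int_absorb1)
    also have "\<dots> \<le> cut_weight E w V" by (rule mcle) simp
    also have "\<dots> = 0" using cutV by (simp add: cut_weight_def)
    finally show ?thesis by simp
  qed
  ultimately have sumX: "(\<Sum>x\<in>X. f x) = 0" by simp
  have sumex: "(\<Sum>u\<in>V. - ex v u) = 0"
  proof -
    have "(\<Sum>u\<in>V. ex v u) = (\<Sum>u\<in>V. g u) - (\<Sum>u\<in>V. boundary_flux E hd_of v u)"
      unfolding ex_def by (simp add: sum_subtractf)
    also have "\<dots> = (\<Sum>x\<in>V \<inter> X. f x)" using sumg[OF finV] fluxV by simp
    also have "V \<inter> X = X" by (auto simp: V_def)
    finally show ?thesis using sumX by (simp add: sum_negf)
  qed
  have nn: "\<forall>u\<in>V. 0 \<le> - ex v u" using r_empty by (auto simp: r_def not_less)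
  have allz: "\<forall>u\<in>V. ex v u = 0"
  proof -
    have "\<forall>u\<in>V. - ex v u = 0"
      using sum_nonneg_eq_0_iff[OF finV, of "\<lambda>u. - ex v u"] nn sumex by simp
    then show ?thesis by simp
  qed
  show ?thesis
  proof (intro exI conjI)
    show "is_flow I E w hd_of v"
      unfolding is_flow_def
    proof (intro conjI ballI)
      fix e assume "e \<in> E" then show "\<bar>v e\<bar> \<le> w e" by (rule vbound)
    next
      fix i assume i: "i \<in> I"
      then have iV: "i \<in> V" and iX: "i \<notin> X" using disj by (auto simp: V_def)
      have "ex v i = 0" using allz iV by blast
      then have "boundary_flux E hd_of v i = 0" using iX by (simp add: ex_def g_def)
      then show "(\<Sum>e\<in>{e\<in>E. i \<in> e}. orient_sign hd_of i e * v e) = 0"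
        by (simp add: boundary_flux_def)
    qed
    show "\<forall>x\<in>X. f x = boundary_flux E hd_of v x"
    proof
      fix x assume "x \<in> X"
      then have "x \<in> V" by (simp add: V_def)
      then have "ex v x = 0" using allz by blast
      with \<open>x \<in> X\<close> show "f x = boundary_flux E hd_of v x" by (simp add: ex_def g_def)
    qed
  qed
qed

theorem theorem29:
  fixes I X :: "'a set" and E :: "'a set set" and w :: "'a set \<Rightarrow> real"
    and hd_of :: "'a set \<Rightarrow> 'a" and f :: "'a \<Rightarrow> real"
  assumes "finite I" and "finite X" and "I \<inter> X = {}"
    and "\<forall>e\<in>E. \<exists>a b. e = {a, b} \<and> a \<noteq> b \<and> a \<in> I \<union> X \<and> b \<in> I \<union> X"
    and "\<forall>e\<in>E. w e > 0"
    and "\<forall>e\<in>E. hd_of e \<in> e"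
  shows "f \<in> F_poly X (min_cut I X E w) \<longleftrightarrow>
         (\<exists>v. is_flow I E w hd_of v \<and> (\<forall>x\<in>X. f x = boundary_flux E hd_of v x))"
proof
  assume "f \<in> F_poly X (min_cut I X E w)"
  then show "\<exists>v. is_flow I E w hd_of v \<and> (\<forall>x\<in>X. f x = boundary_flux E hd_of v x)"
    using F_to_flow[OF assms] by blast
next
  assume "\<exists>v. is_flow I E w hd_of v \<and> (\<forall>x\<in>X. f x = boundary_flux E hd_of v x)"
  then obtain v where "is_flow I E w hd_of v" "\<forall>x\<in>X. f x = boundary_flux E hd_of v x" by blast
  then show "f \<in> F_poly X (min_cut I X E w)"
    using flow_in_F[OF assms(1,2,4,6)] by blast
qed

end
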